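(* For a function $f:\mathbb{R}\to\mathbb{R}$, $V>0$ and $p\in(0,\infty)$ define $$\|f\|_{p,V}:=\sup\Big\{\Big(\frac{1}{|\Omega|}\int_{\Omega}|f(x)|^{p}\,dx\Big)^{1/p} : \Omega\subset\mathbb{R} \text{ open and convex},\ |\Omega|=V\Big\},$$ and let $L^p_V:=\{f\mid \|f\|_{p,V}<\infty\}$ modulo functions vanishing almost everywhere. Let $p\in[1,\infty)$ and $T,S>0$ with $T<S$ such that $S/T\notin\mathbb{N}$. Then there exist $f,g\in L^p_T$ such that $$\|f\|_{p,T}<\|f\|_{p,S}\quad\text{and}\quad\|g\|_{p,S}<\|g\|_{p,T}.$$
   Context: $|\Omega|$ denotes Lebesgue measure; open convex subsets of $\mathbb{R}$ are open intervals; functions are measurable. *)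

theory Defs
  imports "HOL-Analysis.Analysis"
begin

definition enn_root :: "real \<Rightarrow> ennreal \<Rightarrow> ennreal" where
  "enn_root p A = (if A = \<infinity> then \<infinity> else ennreal ((enn2real A) powr (1 / p)))"

definition avg_p :: "real \<Rightarrow> real \<Rightarrow> (real \<Rightarrow> real) \<Rightarrow> real set \<Rightarrow> ennreal" where
  "avg_p p V f \<Omega> = (\<integral>\<^sup>+ x\<in>\<Omega>. ennreal (\<bar>f x\<bar> powr p) \<partial>lborel) / ennreal V"

definition norm_pV :: "real \<Rightarrow> real \<Rightarrow> (real \<Rightarrow> real) \<Rightarrow> ennreal" where
  "norm_pV p V f = (SUP \<Omega> \<in> {\<Omega>. open \<Omega> \<and> convex \<Omega> \<and> emeasure lborel \<Omega> = ennreal V}.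
                      enn_root p (avg_p p V f \<Omega>))"

text \<open>Membership in L^p_V (representatives: measurable functions with finite norm).\<close>
definition in_LpV :: "real \<Rightarrow> real \<Rightarrow> (real \<Rightarrow> real) \<Rightarrow> bool" where
  "in_LpV p V f \<longleftrightarrow> f \<in> borel_measurable lborel \<and> norm_pV p V f < \<infinity>"

end

theory Submission
  imports Defs
begin

lemma enn_root_mono:
  assumes "A \<le> B" "p > 0"
  shows "enn_root p A \<le> enn_root p B"
proof (cases "B = \<infinity>")
  case True thus ?thesis by (simp add: enn_root_def)
next
  case False
  then have "A \<noteq> \<infinity>" using assms(1) by (auto simp: top_unique)
  moreover have "enn2real A \<le> enn2real B" using assms(1) False by (simp add: enn2real_mono less_top)
  ultimately show ?thesis using False assms(2)
    by (auto simp: enn_root_def intro!: ennreal_leI powr_mono2)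
qed

lemma enn_root_ennreal:
  assumes "a \<ge> 0"
  shows "enn_root p (ennreal a) = ennreal (a powr (1/p))"
  using assms by (simp add: enn_root_def)

lemma enn_root_strict:
  assumes "0 \<le> a" "a < b" "p > 0"
  shows "enn_root p (ennreal a) < enn_root p (ennreal b)"
proof -
  have "a powr (1/p) < b powr (1/p)" using assms by (intro powr_less_mono2) auto
  thus ?thesis using assms by (simp add: enn_root_ennreal ennreal_lessI)
qed

lemma avg_formula:
  assumes "\<And>x. h x \<ge> 0" "p > 0"
  shows "avg_p p V (\<lambda>x. h x powr (1/p)) \<Omega> = (\<integral>\<^sup>+ x\<in>\<Omega>. ennreal (h x) \<partial>lborel) / ennreal V"
proof -
  have "\<bar>h x powr (1/p)\<bar> powr p = h x" for x
    using assms by (simp add: powr_powr)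
  thus ?thesis by (simp add: avg_p_def)
qed

lemma norm_upper:
  assumes "\<And>\<Omega>. open \<Omega> \<Longrightarrow> convex \<Omega> \<Longrightarrow> emeasure lborel \<Omega> = ennreal V \<Longrightarrow> avg_p p V f \<Omega> \<le> c"
    "p > 0"
  shows "norm_pV p V f \<le> enn_root p c"
  unfolding norm_pV_def using assms by (auto intro!: SUP_least enn_root_mono)

lemma norm_lower:
  assumes "open \<Omega>" "convex \<Omega>" "emeasure lborel \<Omega> = ennreal V"
  shows "enn_root p (avg_p p V f \<Omega>) \<le> norm_pV p V f"
  unfolding norm_pV_def using assms by (auto intro!: SUP_upper)

lemma int_sum_ind:
  assumes "finite K" "\<And>j. J j \<in> sets borel" "\<Omega> \<in> sets borel"
  shows "(\<integral>\<^sup>+ x\<in>\<Omega>. ennreal (\<Sum>j\<in>K. indicator (J j) x) \<partial>lborel) = (\<Sum>j\<in>K. emeasure lborel (J j \<inter> \<Omega>))"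
proof -
  have "(\<integral>\<^sup>+ x\<in>\<Omega>. ennreal (\<Sum>j\<in>K. indicator (J j) x) \<partial>lborel)
      = (\<integral>\<^sup>+ x. (\<Sum>j\<in>K. indicator (J j \<inter> \<Omega>) x) \<partial>lborel)"
    by (intro nn_integral_cong) (auto simp del: sum_ennreal simp: sum_ennreal[symmetric] sum_distrib_right indicator_def intro!: sum.cong)
  also have "\<dots> = (\<Sum>j\<in>K. emeasure lborel (J j \<inter> \<Omega>))"
    using assms by (subst nn_integral_sum) (auto intro!: sum.cong)
  finally show ?thesis .
qed

lemma convex_width:
  fixes \<Omega> :: "real set"
  assumes "convex \<Omega>" "emeasure lborel \<Omega> = ennreal V" "x \<in> \<Omega>" "y \<in> \<Omega>" "x \<le> y" "V > 0" "open \<Omega>"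
  shows "y - x \<le> V"
proof -
  have "{x..y} \<subseteq> \<Omega>" using assms convex_contains_segment[of \<Omega>] closed_segment_eq_real_ivl[of x y]
    by auto
  hence "emeasure lborel {x..y} \<le> emeasure lborel \<Omega>" using assms(7) by (intro emeasure_mono) auto
  thus ?thesis using assms by simp
qed

lemma spikes_bound:
  fixes \<Omega> :: "real set"
  assumes "convex \<Omega>" "emeasure lborel \<Omega> = ennreal T" "T > 0" "\<delta> \<ge> 0" "d - \<delta> > T" "open \<Omega>"
  shows "(\<Sum>j\<in>{..k}. emeasure lborel ({real j * d <..< real j * d + \<delta>} \<inter> \<Omega>)) \<le> ennreal \<delta>"
proof -
  define J where "J j = {real j * d <..< real j * d + \<delta>}" for j :: nat
  have d0: "d > 0" using assms by simp
  have excl: False if "i < j" "x \<in> J i \<inter> \<Omega>" "y \<in> J j \<inter> \<Omega>" for i j x y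
  proof -
    have "real j * d \<ge> (real i + 1) * d" using that(1) d0
      by (intro mult_right_mono) auto
    hence "y - x > T" using that(2,3) assms(5) by (auto simp: J_def algebra_simps)
    moreover have "y - x \<le> T" using convex_width[OF assms(1,2), of x y] that assms(3,6) \<open>y - x > T\<close>
      by auto
    ultimately show False by simp
  qed
  show ?thesis
  proof (cases "\<exists>j0\<in>{..k}. J j0 \<inter> \<Omega> \<noteq> {}")
    case True
    then obtain j0 where j0: "j0 \<in> {..k}" "J j0 \<inter> \<Omega> \<noteq> {}" by blast
    have z: "J j \<inter> \<Omega> = {}" if "j \<noteq> j0" for j
    proof (rule ccontr)
      assume "J j \<inter> \<Omega> \<noteq> {}"
      then obtain y where "y \<in> J j \<inter> \<Omega>" by blast
      moreover obtain x where "x \<in> J j0 \<inter> \<Omega>" using j0 by blast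
      ultimately show False using excl[of j j0 y x] excl[of j0 j x y] that
        by (cases "j < j0") auto
    qed
    have "(\<Sum>j\<in>{..k}. emeasure lborel (J j \<inter> \<Omega>)) = (\<Sum>j\<in>{j0}. emeasure lborel (J j \<inter> \<Omega>))"
    proof (rule sum.mono_neutral_right)
      have "\<forall>i\<in>{..k} - {j0}. J i \<inter> \<Omega> = {}" using z by blast
      thus "\<forall>i\<in>{..k} - {j0}. emeasure lborel (J i \<inter> \<Omega>) = 0" by simp
    qed (use j0 in auto)
    also have "\<dots> \<le> emeasure lborel (J j0)" by (auto simp: J_def intro!: emeasure_mono)
    also have "\<dots> = ennreal \<delta>" using assms by (simp add: J_def)
    finally show ?thesis by (simp add: J_def)
  next
    case False
    thus ?thesis by (simp add: J_def)
  qed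
qed

theorem lemma2p4:
  fixes p T S :: real
  assumes "1 \<le> p" and "0 < T" and "T < S" and "S / T \<notin> \<nat>"
  shows "\<exists>f g. in_LpV p T f \<and> in_LpV p T g \<and>
           norm_pV p T f < norm_pV p S f \<and> norm_pV p S g < norm_pV p T g"
proof -
  have p0: "p > 0" using assms by simp
  define k where "k = nat \<lfloor>S / T\<rfloor>"
  have ST: "S / T > 1" using assms by simp
  have kfl: "real k = of_int \<lfloor>S / T\<rfloor>" using ST unfolding k_def by simp
  have k1: "real k \<le> S / T" "S / T < real k + 1" using kfl by linarith+
  have kne: "real k \<noteq> S / T" using assms(4) of_nat_in_Nats[of k] by metis
  have kT: "real k * T < S" using k1(1) kne assms(2) by (simp add: field_simps)
  have kT2: "S < (real k + 1) * T" using k1(2) assms(2) by (simp add: field_simps)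
  define r where "r = S - real k * T"
  have r0: "r > 0" using kT r_def by simp
  define e where "e = r / (real k + 1)"
  have e0: "e > 0" using r0 by (simp add: e_def)
  define d where "d = T + e"
  define \<delta> where "\<delta> = e / 2"
  have \<delta>0: "\<delta> > 0" using e0 by (simp add: \<delta>_def)
  have dd: "d - \<delta> > T" using e0 by (simp add: d_def \<delta>_def)
  have ke: "(real k + 1) * e = r" using e_def by simp
  have lastS: "real k * d + \<delta> \<le> S" using ke e0 by (simp add: d_def \<delta>_def r_def algebra_simps)
  define J where "J j = {real j * d <..< real j * d + \<delta>}" for j :: nat
  define h where "h x = (\<Sum>j\<in>{..k}. indicator (J j) x :: real)" for x
  define f where "f x = h x powr (1/p)" for x
  have h0: "\<And>x. h x \<ge> 0" by (simp add: h_def sum_nonneg)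
  have Jb: "\<And>j. J j \<in> sets borel" by (simp add: J_def)
  have avgf: "avg_p p V f \<Omega> = (\<Sum>j\<in>{..k}. emeasure lborel (J j \<inter> \<Omega>)) / ennreal V"
    if "open \<Omega>" for V \<Omega>
    using avg_formula[where V=V and \<Omega>=\<Omega>, OF h0 p0] int_sum_ind[of "{..k}" J \<Omega>] Jb borel_open[OF that]
    by (simp add: f_def[abs_def] h_def)
  have upT: "norm_pV p T f \<le> enn_root p (ennreal (\<delta> / T))"
  proof (rule norm_upper[OF _ p0])
    fix \<Omega> :: "real set" assume \<Omega>: "open \<Omega>" "convex \<Omega>" "emeasure lborel \<Omega> = ennreal T"
    have "(\<Sum>j\<in>{..k}. emeasure lborel (J j \<inter> \<Omega>)) \<le> ennreal \<delta>"
      using spikes_bound[OF \<Omega>(2,3) assms(2) _ dd \<Omega>(1), of k] \<delta>0 by (simp add: J_def)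
    hence "avg_p p T f \<Omega> \<le> ennreal \<delta> / ennreal T"
      unfolding avgf[OF \<Omega>(1)] by (rule divide_right_mono_ennreal)
    thus "avg_p p T f \<Omega> \<le> ennreal (\<delta> / T)" using \<delta>0 assms(2) by (simp add: divide_ennreal)
  qed
  have loS: "enn_root p (ennreal ((real k + 1) * \<delta> / S)) \<le> norm_pV p S f"
  proof -
    let ?\<Omega> = "{0<..<S}"
    have sub: "J j \<inter> ?\<Omega> = J j" if "j \<in> {..k}" for j
    proof -
      have "real j * d \<le> real k * d" using that dd \<delta>0 assms(2) by (intro mult_right_mono) auto
      hence a2: "real j * d + \<delta> \<le> S" using lastS by linarith
      have a1: "0 \<le> real j * d" using \<delta>0 dd assms(2) by simp
      note a = a1 a2
      define c where "c = real j * d"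
      show ?thesis unfolding J_def c_def[symmetric] using a[folded c_def] by auto
    qed
    have "(\<Sum>j\<in>{..k}. emeasure lborel (J j \<inter> ?\<Omega>)) = (\<Sum>j\<in>{..k}. ennreal \<delta>)"
      using sub \<delta>0 by (intro sum.cong) (auto simp: J_def)
    also have "\<dots> = ennreal ((real k + 1) * \<delta>)"
    proof -
      have "(\<Sum>j\<in>{..k}. ennreal \<delta>) = ennreal (\<Sum>j\<in>{..k}. \<delta>)" using \<delta>0 by (intro sum_ennreal) auto
      also have "(\<Sum>j\<in>{..k}. \<delta>) = (real k + 1) * \<delta>" by simp
      finally show ?thesis .
    qed
    finally have "avg_p p S f ?\<Omega> = ennreal ((real k + 1) * \<delta> / S)"
      using avgf[of ?\<Omega> S] \<delta>0 assms by (simp add: divide_ennreal)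
    moreover have "emeasure lborel ?\<Omega> = ennreal S" using assms by simp
    ultimately show ?thesis using norm_lower[of ?\<Omega> S p f] by (simp add: convex_real_interval)
  qed
  have strictf: "enn_root p (ennreal (\<delta> / T)) < enn_root p (ennreal ((real k + 1) * \<delta> / S))"
  proof (rule enn_root_strict[OF _ _ p0])
    show "0 \<le> \<delta> / T" using \<delta>0 assms by simp
    have "\<delta> * S < \<delta> * ((real k + 1) * T)" using kT2 \<delta>0 by (rule mult_strict_left_mono)
    hence "\<delta> * S < (real k + 1) * \<delta> * T" by (simp add: ac_simps)
    thus "\<delta> / T < (real k + 1) * \<delta> / S" using assms by (simp add: field_simps)
  qed
  have fm: "f \<in> borel_measurable lborel" unfolding f_def[abs_def] h_def J_def by measurable
  have fin: "enn_root p (ennreal a) < \<infinity>" if "a \<ge> 0" for a using that by (simp add: enn_root_ennreal)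
  have f_ok: "in_LpV p T f \<and> norm_pV p T f < norm_pV p S f"
    using fm upT loS strictf fin[of "\<delta> / T"] \<delta>0 assms(2) unfolding in_LpV_def
    by (meson order.strict_trans1 order.strict_trans2 divide_nonneg_pos less_imp_le)
  define hg where "hg x = (indicator {0<..<T} x :: real)" for x
  define g where "g x = hg x powr (1/p)" for x
  have hg0: "\<And>x. hg x \<ge> 0" by (simp add: hg_def)
  have avgg: "avg_p p V g \<Omega> = emeasure lborel ({0<..<T} \<inter> \<Omega>) / ennreal V"
    if "open \<Omega>" for V \<Omega>
    using avg_formula[where V=V and \<Omega>=\<Omega>, OF hg0 p0] int_sum_ind[of "{0::nat}" "\<lambda>_. {0<..<T}" \<Omega>] borel_open[OF that]
    by (simp add: g_def[abs_def] hg_def)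
  have upg: "norm_pV p V g \<le> enn_root p (ennreal (T / V))" if "V > 0" for V
  proof (rule norm_upper[OF _ p0])
    fix \<Omega> :: "real set" assume \<Omega>: "open \<Omega>" "convex \<Omega>" "emeasure lborel \<Omega> = ennreal V"
    have "emeasure lborel ({0<..<T} \<inter> \<Omega>) \<le> emeasure lborel {0<..<T}"
      using \<Omega> by (intro emeasure_mono) auto
    hence "emeasure lborel ({0<..<T} \<inter> \<Omega>) \<le> ennreal T" using assms by simp
    hence "avg_p p V g \<Omega> \<le> ennreal T / ennreal V"
      unfolding avgg[OF \<Omega>(1)] by (rule divide_right_mono_ennreal)
    thus "avg_p p V g \<Omega> \<le> ennreal (T / V)" using that assms(2) by (simp add: divide_ennreal)
  qed
  have log: "enn_root p (ennreal 1) \<le> norm_pV p T g"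
  proof -
    have "avg_p p T g {0<..<T} = ennreal 1"
      using avgg[of "{0<..<T}" T] assms(2) by (simp add: divide_ennreal)
    thus ?thesis using norm_lower[of "{0<..<T}" T p g] assms(2) by (simp add: convex_real_interval)
  qed
  have strictg: "enn_root p (ennreal (T / S)) < enn_root p (ennreal 1)"
    using enn_root_strict[OF _ _ p0, of "T / S" 1] assms by simp
  have gm: "g \<in> borel_measurable lborel" unfolding g_def[abs_def] hg_def by measurable
  have g_ok: "in_LpV p T g \<and> norm_pV p S g < norm_pV p T g"
  proof
    have "norm_pV p T g \<le> enn_root p (ennreal (T / T))" using upg[of T] assms(2) by simp
    thus "in_LpV p T g" using gm fin[of "T / T"] assms(2) unfolding in_LpV_def
      by (meson order.strict_trans1 less_imp_le divide_nonneg_pos)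
    show "norm_pV p S g < norm_pV p T g"
      using upg[of S] strictg log assms by (meson order.strict_trans1 order.strict_trans2 less_trans)
  qed
  show ?thesis using f_ok g_ok by blast
qed

end
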